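(* Let $(H,L_H)$ be a right-resolving labeled graph presenting $Y=L_H(X_H)$. Let $\gamma$ be a finite path in $H$ whose start vertex $s_H(\gamma)$ is regular. Then the terminal vertex $t_H(\gamma)$ is regular.
   Context: A labeled graph $(H,L_H)$: finite directed graph (vertices $V_H$, edges $E_H$, source/terminal maps $s_H,t_H$) without sinks or sources, labeling $L_H:E_H\to A$, edge shift $X_H$; $L_H$ acts coordinatewise on paths. $X_H[0,\infty)$ denotes right-infinite paths and $X_H(-\infty,-1]$ left-infinite paths; $s_H$ of a (finite or right-infinite) path is the source of its first edge, $t_H$ of a (finite or left-infinite) path is the terminal vertex of its last edge; $Y[0,\infty)=\{y_{[0,\infty)}:y\in Y\}$. Right-resolving: distinct edges with the same source have distinct labels. $f_H(v)=\{L_H(x):x\in X_H[0,\infty), s_H(x)=v\}$; for $y\in Y$, $F(y)=\{w\in Y[0,\infty): y_{(-\infty,-1]}w\in Y\}$. A vertex $v$ is regular if there is $z\in X_H$ with $t_H(z_{(-\infty,-1]})=v$ and $f_H(v)=F(L_H(z))$. *)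

theory Defs
  imports Main
begin

definition labeled_graph :: "'v set \<Rightarrow> 'e set \<Rightarrow> ('e \<Rightarrow> 'v) \<Rightarrow> ('e \<Rightarrow> 'v) \<Rightarrow> bool" where
  "labeled_graph V E s t \<longleftrightarrow> finite V \<and> finite E \<and>
     (\<forall>e\<in>E. s e \<in> V \<and> t e \<in> V) \<and>
     (\<forall>v\<in>V. \<exists>e\<in>E. s e = v) \<and>     \<comment> \<open>no sinks\<close>
     (\<forall>v\<in>V. \<exists>e\<in>E. t e = v)"

definition right_resolving :: "'e set \<Rightarrow> ('e \<Rightarrow> 'v) \<Rightarrow> ('e \<Rightarrow> 'a) \<Rightarrow> bool" where
  "right_resolving E s L \<longleftrightarrow>
     (\<forall>e1\<in>E. \<forall>e2\<in>E. e1 \<noteq> e2 \<and> s e1 = s e2 \<longrightarrow> L e1 \<noteq> L e2)"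

definition edge_shift :: "'e set \<Rightarrow> ('e \<Rightarrow> 'v) \<Rightarrow> ('e \<Rightarrow> 'v) \<Rightarrow> (int \<Rightarrow> 'e) set" where
  "edge_shift E s t = {x. (\<forall>i. x i \<in> E) \<and> (\<forall>i. t (x i) = s (x (i + 1)))}"

definition right_paths :: "'e set \<Rightarrow> ('e \<Rightarrow> 'v) \<Rightarrow> ('e \<Rightarrow> 'v) \<Rightarrow> (nat \<Rightarrow> 'e) set" where
  "right_paths E s t = {x. (\<forall>n. x n \<in> E) \<and> (\<forall>n. t (x n) = s (x (Suc n)))}"

definition presented_shift :: "'e set \<Rightarrow> ('e \<Rightarrow> 'v) \<Rightarrow> ('e \<Rightarrow> 'v) \<Rightarrow> ('e \<Rightarrow> 'a) \<Rightarrow> (int \<Rightarrow> 'a) set" where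
  "presented_shift E s t L = (\<lambda>x. L \<circ> x) ` edge_shift E s t"

definition right_part :: "(int \<Rightarrow> 'a) set \<Rightarrow> (nat \<Rightarrow> 'a) set" where
  "right_part Y = (\<lambda>y. \<lambda>n. y (int n)) ` Y"

definition glue :: "(int \<Rightarrow> 'a) \<Rightarrow> (nat \<Rightarrow> 'a) \<Rightarrow> (int \<Rightarrow> 'a)" where
  "glue y w = (\<lambda>i. if i < 0 then y i else w (nat i))"

definition follower_H :: "'e set \<Rightarrow> ('e \<Rightarrow> 'v) \<Rightarrow> ('e \<Rightarrow> 'v) \<Rightarrow> ('e \<Rightarrow> 'a) \<Rightarrow> 'v \<Rightarrow> (nat \<Rightarrow> 'a) set" where
  "follower_H E s t L v = {L \<circ> x | x. x \<in> right_paths E s t \<and> s (x 0) = v}"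

definition future :: "(int \<Rightarrow> 'a) set \<Rightarrow> (int \<Rightarrow> 'a) \<Rightarrow> (nat \<Rightarrow> 'a) set" where
  "future Y y = {w \<in> right_part Y. glue y w \<in> Y}"

text \<open>Regular vertex: there is z in X_H with t_H(z_{(-\<infinity>,-1]}) = t_H(z_{-1}) = v
  and f_H(v) = F(L_H(z)).\<close>
definition regular_vertex :: "'e set \<Rightarrow> ('e \<Rightarrow> 'v) \<Rightarrow> ('e \<Rightarrow> 'v) \<Rightarrow> ('e \<Rightarrow> 'a) \<Rightarrow> 'v \<Rightarrow> bool" where
  "regular_vertex E s t L v \<longleftrightarrow>
     (\<exists>z\<in>edge_shift E s t. t (z (-1)) = v \<and>
        follower_H E s t L v = future (presented_shift E s t L) (L \<circ> z))"

definition finite_path :: "'e set \<Rightarrow> ('e \<Rightarrow> 'v) \<Rightarrow> ('e \<Rightarrow> 'v) \<Rightarrow> 'e list \<Rightarrow> bool" where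
  "finite_path E s t p \<longleftrightarrow> p \<noteq> [] \<and> set p \<subseteq> E \<and>
     (\<forall>i. Suc i < length p \<longrightarrow> t (p ! i) = s (p ! Suc i))"

end

theory Submission
  imports Defs
begin

lemma shift_Y:
  assumes "y \<in> presented_shift E s t L"
  shows "(\<lambda>i. y (i + k)) \<in> presented_shift E s t L"
proof -
  from assms obtain x where x: "x \<in> edge_shift E s t" "y = L \<circ> x"
    unfolding presented_shift_def by auto
  have "(\<lambda>i. x (i + k)) \<in> edge_shift E s t"
    using x(1) unfolding edge_shift_def by (auto simp: algebra_simps)
  moreover have "(\<lambda>i. y (i + k)) = L \<circ> (\<lambda>i. x (i + k))" using x(2) by auto
  ultimately show ?thesis unfolding presented_shift_def by blast
qed

lemma glue_right_part:
  assumes "glue y w \<in> Y" shows "w \<in> right_part Y"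
proof -
  have "w = (\<lambda>n. glue y w (int n))" by (auto simp: glue_def)
  then show ?thesis using assms unfolding right_part_def by blast
qed

lemma future_iff: "w \<in> future Y y \<longleftrightarrow> glue y w \<in> Y"
  unfolding future_def using glue_right_part by blast

lemma right_path_exists:
  assumes "labeled_graph V E s t" "u \<in> V"
  shows "\<exists>r \<in> right_paths E s t. s (r 0) = u"
proof -
  define f where "f = (\<lambda>v. SOME e. e \<in> E \<and> s e = v)"
  have fE: "v \<in> V \<Longrightarrow> f v \<in> E \<and> s (f v) = v" for v
    using assms(1) unfolding labeled_graph_def f_def by (metis (mono_tags, lifting) someI_ex)
  have tV: "e \<in> E \<Longrightarrow> t e \<in> V" for e using assms(1) unfolding labeled_graph_def by auto
  define r where "r = rec_nat (f u) (\<lambda>n e. f (t e))"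
  have r0: "r 0 = f u" and rS: "r (Suc n) = f (t (r n))" for n by (simp_all add: r_def)
  have rE: "r n \<in> E" for n
    by (induction n) (use fE tV assms(2) r0 rS in auto)
  have "r \<in> right_paths E s t"
    unfolding right_paths_def using rE rS fE tV by auto
  moreover have "s (r 0) = u" using r0 fE assms(2) by auto
  ultimately show ?thesis by blast
qed

definition ncons :: "'a \<Rightarrow> (nat \<Rightarrow> 'a) \<Rightarrow> nat \<Rightarrow> 'a" where
  "ncons a w n = (case n of 0 \<Rightarrow> a | Suc m \<Rightarrow> w m)"

lemma one_edge:
  assumes G: "labeled_graph V E s t"
    and RR: "right_resolving E s L"
    and eE: "e \<in> E"
    and reg: "regular_vertex E s t L (s e)"
  shows "regular_vertex E s t L (t e)"
proof -
  let ?Y = "presented_shift E s t L"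
  from reg obtain z where z: "z \<in> edge_shift E s t" "t (z (-1)) = s e"
    and fz: "follower_H E s t L (s e) = future ?Y (L \<circ> z)"
    unfolding regular_vertex_def by blast
  have "t e \<in> V" using G eE unfolding labeled_graph_def by auto
  then obtain r where r: "r \<in> right_paths E s t" "s (r 0) = t e"
    using right_path_exists[OF G] by blast
  define z' where "z' = (\<lambda>i::int. if i < -1 then z (i+1) else if i = -1 then e else r (nat i))"
  have z'E: "z' \<in> edge_shift E s t"
  proof -
    have "z' i \<in> E" for i using z(1) r(1) eE
      unfolding z'_def edge_shift_def right_paths_def by auto
    moreover have "t (z' i) = s (z' (i + 1))" for i
    proof -
      consider "i < -2" | "i = -2" | "i = -1" | "i \<ge> 0" by linarith
      then show ?thesis
      proof cases
        case 1 then show ?thesis using z(1) unfolding z'_def edge_shift_def by auto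
      next
        case 2 then show ?thesis using z(2) unfolding z'_def by auto
      next
        case 3 then show ?thesis using r(2) unfolding z'_def by auto
      next
        case 4
        then have "nat (i+1) = Suc (nat i)" by auto
        then show ?thesis using 4 r(1) unfolding z'_def right_paths_def by auto
      qed
    qed
    ultimately show ?thesis unfolding edge_shift_def by auto
  qed
  have gl: "glue (L \<circ> z') w = (\<lambda>i. glue (L \<circ> z) (ncons (L e) w) (i + 1))" for w
  proof
    fix i :: int
    consider "i < -1" | "i = -1" | "i \<ge> 0" by linarith
    then show "glue (L \<circ> z') w i = glue (L \<circ> z) (ncons (L e) w) (i + 1)"
    proof cases
      case 3
      then have "nat (i+1) = Suc (nat i)" by auto
      then show ?thesis using 3 by (simp add: glue_def z'_def ncons_def)
    qed (auto simp: glue_def z'_def ncons_def)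
  qed
  have eq: "glue (L \<circ> z') w \<in> ?Y \<longleftrightarrow> glue (L \<circ> z) (ncons (L e) w) \<in> ?Y" for w
  proof
    assume "glue (L \<circ> z') w \<in> ?Y"
    from shift_Y[OF this, of "-1"] show "glue (L \<circ> z) (ncons (L e) w) \<in> ?Y"
      unfolding gl by simp
  next
    assume "glue (L \<circ> z) (ncons (L e) w) \<in> ?Y"
    from shift_Y[OF this, of 1] show "glue (L \<circ> z') w \<in> ?Y" unfolding gl by simp
  qed
  have "follower_H E s t L (t e) = future ?Y (L \<circ> z')"
  proof (intro set_eqI iffI)
    fix w assume "w \<in> follower_H E s t L (t e)"
    then obtain x where x: "x \<in> right_paths E s t" "s (x 0) = t e" "w = L \<circ> x"
      unfolding follower_H_def by blast
    define x' where "x' = ncons e x"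
    have "x' \<in> right_paths E s t" using x eE
      unfolding x'_def right_paths_def ncons_def by (auto split: nat.splits)
    moreover have "s (x' 0) = s e" by (simp add: x'_def ncons_def)
    moreover have "L \<circ> x' = ncons (L e) w"
      using x(3) by (auto simp: x'_def ncons_def split: nat.splits)
    ultimately have "ncons (L e) w \<in> follower_H E s t L (s e)"
      unfolding follower_H_def by (metis (mono_tags, lifting) mem_Collect_eq)
    then have "glue (L \<circ> z) (ncons (L e) w) \<in> ?Y" using fz future_iff by blast
    then show "w \<in> future ?Y (L \<circ> z')" using eq future_iff by blast
  next
    fix w assume "w \<in> future ?Y (L \<circ> z')"
    then have "glue (L \<circ> z') w \<in> ?Y" using future_iff by blast
    then have "glue (L \<circ> z) (ncons (L e) w) \<in> ?Y" using eq by blast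
    then have "ncons (L e) w \<in> follower_H E s t L (s e)" using fz future_iff by blast
    then obtain x where x: "x \<in> right_paths E s t" "s (x 0) = s e" "ncons (L e) w = L \<circ> x"
      unfolding follower_H_def by auto
    have "L (x 0) = L e" using fun_cong[OF x(3), of 0] by (simp add: ncons_def)
    moreover have "x 0 \<in> E" using x(1) unfolding right_paths_def by auto
    ultimately have x0: "x 0 = e" using RR eE x(2) unfolding right_resolving_def by blast
    have "x \<circ> Suc \<in> right_paths E s t" using x(1) unfolding right_paths_def by auto
    moreover have "s ((x \<circ> Suc) 0) = t e" using x(1) x0 unfolding right_paths_def by auto
    moreover have "w = L \<circ> (x \<circ> Suc)"
    proof
      fix n show "w n = (L \<circ> (x \<circ> Suc)) n" using fun_cong[OF x(3), of "Suc n"]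
        by (simp add: ncons_def)
    qed
    ultimately show "w \<in> follower_H E s t L (t e)" unfolding follower_H_def by blast
  qed
  moreover have "t (z' (-1)) = t e" by (simp add: z'_def)
  ultimately show ?thesis unfolding regular_vertex_def using z'E by blast
qed

lemma path_regular:
  assumes G: "labeled_graph V E s t" and RR: "right_resolving E s L"
  shows "finite_path E s t p \<Longrightarrow> regular_vertex E s t L (s (hd p)) \<Longrightarrow>
    regular_vertex E s t L (t (last p))"
proof (induction p)
  case Nil then show ?case by (simp add: finite_path_def)
next
  case (Cons e p)
  have eE: "e \<in> E" using Cons.prems(1) unfolding finite_path_def by auto
  have re: "regular_vertex E s t L (t e)"
    using one_edge[OF G RR eE] Cons.prems(2) by simp
  show ?case
  proof (cases "p = []")
    case True then show ?thesis using re by simp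
  next
    case False
    have fp: "finite_path E s t p"
    proof -
      have h: "\<forall>i. Suc i < length (e # p) \<longrightarrow> t ((e # p) ! i) = s ((e # p) ! Suc i)"
        using Cons.prems(1) unfolding finite_path_def by blast
      have "t (p ! i) = s (p ! Suc i)" if "Suc i < length p" for i
        using h[rule_format, of "Suc i"] that by simp
      then show ?thesis using Cons.prems(1) False unfolding finite_path_def by auto
    qed
    have "t e = s (hd p)"
      using Cons.prems(1) False unfolding finite_path_def
      by (metis hd_conv_nth length_Cons length_greater_0_conv nth_Cons_0 nth_Cons_Suc Suc_less_eq)
    then show ?thesis using Cons.IH[OF fp] re False by simp
  qed
qed

theorem lemma2p2:
  fixes V :: "'v set" and E :: "'e set" and s t :: "'e \<Rightarrow> 'v" and L :: "'e \<Rightarrow> 'a"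
    and \<gamma> :: "'e list"
  assumes "labeled_graph V E s t"
    and "right_resolving E s L"
    and "finite_path E s t \<gamma>"
    and "regular_vertex E s t L (s (hd \<gamma>))"
  shows "regular_vertex E s t L (t (last \<gamma>))"
  using path_regular[OF assms(1,2)] assms(3,4) by blast

end
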